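(* Let $p$ be an odd prime, $G$ a finite group and $P$ a Sylow $p$-subgroup of $G$. Assume that $P$ is nontrivial and that $N_G(P)/PC_G(P)$ has odd order. Then no nonidentity element of $Z(P)$ is real in $G$.
   Context: An element $t \in G$ is real in $G$ if $t$ is $G$-conjugate to $t^{-1}$. $Z(P)$ is the center of $P$. *)

theory Defs
  imports "HOL-Algebra.Sylow" "HOL-Algebra.Group_Action" "HOL-Computational_Algebra.Primes"
begin

definition centralizer :: "('a, 'b) monoid_scheme \<Rightarrow> 'a set \<Rightarrow> 'a set" where
  "centralizer G H = {g \<in> carrier G. \<forall>h \<in> H. g \<otimes>\<^bsub>G\<^esub> h = h \<otimes>\<^bsub>G\<^esub> g}"

definition group_center :: "('a, 'b) monoid_scheme \<Rightarrow> 'a set \<Rightarrow> 'a set" where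
  "group_center G P = {z \<in> P. \<forall>h \<in> P. z \<otimes>\<^bsub>G\<^esub> h = h \<otimes>\<^bsub>G\<^esub> z}"

definition sylow_subgroup :: "('a, 'b) monoid_scheme \<Rightarrow> nat \<Rightarrow> 'a set \<Rightarrow> bool" where
  "sylow_subgroup G p P \<longleftrightarrow> subgroup P G \<and> (\<exists>a. card P = p ^ a) \<and>
     \<not> p dvd (order G div card P)"

definition real_in :: "('a, 'b) monoid_scheme \<Rightarrow> 'a \<Rightarrow> bool" where
  "real_in G t \<longleftrightarrow> t \<in> carrier G \<and>
     (\<exists>g \<in> carrier G. g \<otimes>\<^bsub>G\<^esub> t \<otimes>\<^bsub>G\<^esub> inv\<^bsub>G\<^esub> g = inv\<^bsub>G\<^esub> t)"

end

theory Submission imports Defs "HOL-Algebra.Zassenhaus" "HOL-Algebra.Multiplicative_Group" begin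

definition cj :: "('a, 'b) monoid_scheme \<Rightarrow> 'a \<Rightarrow> 'a \<Rightarrow> 'a" where
  "cj G x w = x \<otimes>\<^bsub>G\<^esub> w \<otimes>\<^bsub>G\<^esub> inv\<^bsub>G\<^esub> x"

context group begin

lemma cj_closed [simp]: "x \<in> carrier G \<Longrightarrow> w \<in> carrier G \<Longrightarrow> cj G x w \<in> carrier G"
  unfolding cj_def by simp

lemma cj_mult: "x \<in> carrier G \<Longrightarrow> y \<in> carrier G \<Longrightarrow> w \<in> carrier G \<Longrightarrow>
    cj G (x \<otimes> y) w = cj G x (cj G y w)"
  unfolding cj_def by (simp add: m_assoc inv_mult_group)

lemma cj_inv: "x \<in> carrier G \<Longrightarrow> w \<in> carrier G \<Longrightarrow> cj G x (inv w) = inv (cj G x w)"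
  unfolding cj_def by (simp add: m_assoc inv_mult_group)

lemma cj_one [simp]: "w \<in> carrier G \<Longrightarrow> cj G \<one> w = w"
  unfolding cj_def by simp

lemma cj_comm_iff: "x \<in> carrier G \<Longrightarrow> w \<in> carrier G \<Longrightarrow> cj G x w = w \<longleftrightarrow> x \<otimes> w = w \<otimes> x"
  unfolding cj_def
  by (metis inv_solve_right m_closed inv_closed)

lemma cj_back: "x \<in> carrier G \<Longrightarrow> w \<in> carrier G \<Longrightarrow> cj G x w = v \<Longrightarrow> cj G (inv x) v = w"
proof -
  assume x: "x \<in> carrier G" and w: "w \<in> carrier G" and e: "cj G x w = v"
  have "cj G (inv x) v = (inv x \<otimes> x) \<otimes> w \<otimes> (inv x \<otimes> x)"
    using x w unfolding e[symmetric] cj_def by (simp add: m_assoc) (simp add: m_assoc[symmetric])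
  also have "\<dots> = w" using x w by simp
  finally show ?thesis .
qed

lemma cj_eq_iff: "x \<in> carrier G \<Longrightarrow> w \<in> carrier G \<Longrightarrow> v \<in> carrier G \<Longrightarrow> cj G x w = v \<longleftrightarrow> x \<otimes> w = v \<otimes> x"
  unfolding cj_def by (metis inv_solve_right m_closed inv_closed)

lemma conj_set_eq: "x \<in> carrier G \<Longrightarrow> H \<subseteq> carrier G \<Longrightarrow> x <# H #> inv x = cj G x ` H"
  unfolding cj_def l_coset_def r_coset_def by auto

lemma normalizer_iff:
  assumes "H \<subseteq> carrier G"
  shows "x \<in> normalizer G H \<longleftrightarrow> x \<in> carrier G \<and> cj G x ` H = H"
  unfolding normalizer_def stabilizer_def using assms conj_set_eq by auto

lemma normalizer_cj:
  assumes "H \<subseteq> carrier G" "x \<in> normalizer G H" "h \<in> H"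
  shows "cj G x h \<in> H"
  using assms normalizer_iff by blast

lemma normalizer_memI:
  assumes H: "H \<subseteq> carrier G" "finite H" and x: "x \<in> carrier G"
    and cl: "\<And>h. h \<in> H \<Longrightarrow> cj G x h \<in> H"
  shows "x \<in> normalizer G H"
proof -
  have inj: "inj_on (cj G x) H"
  proof (rule inj_onI)
    fix a b assume a: "a \<in> H" and b: "b \<in> H" and e: "cj G x a = cj G x b"
    then have "cj G (inv x) (cj G x a) = cj G (inv x) (cj G x b)" by simp
    then show "a = b" using cj_back[OF x _ refl] a b H(1) by (metis subsetD)
  qed
  have sub: "cj G x ` H \<subseteq> H" using cl by blast
  have "card (cj G x ` H) = card H" using card_image[OF inj] .
  then have "cj G x ` H = H" using card_subset_eq[OF H(2) sub] by simp
  then show ?thesis using normalizer_iff[OF H(1)] x by blast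
qed

lemma centralizer_subgroup:
  assumes "H \<subseteq> carrier G"
  shows "subgroup (centralizer G H) G"
proof (rule subgroupI)
  show "centralizer G H \<subseteq> carrier G" unfolding centralizer_def by blast
  have "\<one> \<in> centralizer G H" unfolding centralizer_def using assms by auto
  then show "centralizer G H \<noteq> {}" by blast
  fix a assume a: "a \<in> centralizer G H"
  then have ac: "a \<in> carrier G" and ah: "\<And>h. h \<in> H \<Longrightarrow> a \<otimes> h = h \<otimes> a"
    unfolding centralizer_def by auto
  have "inv a \<otimes> h = h \<otimes> inv a" if h: "h \<in> H" for h
  proof -
    have hc: "h \<in> carrier G" using h assms by blast
    have "cj G a h = h" using cj_comm_iff[OF ac hc] ah[OF h] by simp
    then have "cj G (inv a) h = h" using cj_back[OF ac hc] by simp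
    then show ?thesis using cj_comm_iff[OF inv_closed[OF ac] hc] by simp
  qed
  then show "inv a \<in> centralizer G H" unfolding centralizer_def using ac by auto
next
  fix a b assume a: "a \<in> centralizer G H" and b: "b \<in> centralizer G H"
  then have ac: "a \<in> carrier G" and ah: "\<And>h. h \<in> H \<Longrightarrow> a \<otimes> h = h \<otimes> a"
    and bc: "b \<in> carrier G" and bh: "\<And>h. h \<in> H \<Longrightarrow> b \<otimes> h = h \<otimes> b"
    unfolding centralizer_def by auto
  have "a \<otimes> b \<otimes> h = h \<otimes> (a \<otimes> b)" if h: "h \<in> H" for h
  proof -
    have hc: "h \<in> carrier G" using h assms by blast
    have "a \<otimes> b \<otimes> h = a \<otimes> (b \<otimes> h)" using ac bc hc by (simp add: m_assoc)
    also have "\<dots> = a \<otimes> (h \<otimes> b)" using bh[OF h] by simp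
    also have "\<dots> = (a \<otimes> h) \<otimes> b" using ac bc hc by (simp add: m_assoc)
    also have "\<dots> = (h \<otimes> a) \<otimes> b" using ah[OF h] by simp
    also have "\<dots> = h \<otimes> (a \<otimes> b)" using ac bc hc by (simp add: m_assoc)
    finally show ?thesis .
  qed
  then show "a \<otimes> b \<in> centralizer G H" unfolding centralizer_def using ac bc by auto
qed

lemma pgroup_fixed_point:
  fixes f :: "'a \<Rightarrow> 'c \<Rightarrow> 'c"
  assumes Q: "subgroup Q G" and cQ: "card Q = p ^ a" and p: "Factorial_Ring.prime (p::nat)"
    and fin: "finite \<Omega>" and ndvd: "\<not> p dvd card \<Omega>"
    and cl: "\<And>h S. h \<in> Q \<Longrightarrow> S \<in> \<Omega> \<Longrightarrow> f h S \<in> \<Omega>"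
    and one: "\<And>S. S \<in> \<Omega> \<Longrightarrow> f \<one> S = S"
    and comp: "\<And>h k S. h \<in> Q \<Longrightarrow> k \<in> Q \<Longrightarrow> S \<in> \<Omega> \<Longrightarrow> f (h \<otimes> k) S = f h (f k S)"
  shows "\<exists>S\<in>\<Omega>. \<forall>h\<in>Q. f h S = S"
proof -
  define H where "H = G\<lparr>carrier := Q\<rparr>"
  define \<phi> where "\<phi> = (\<lambda>h. restrict (f h) \<Omega>)"
  have gH: "group H" unfolding H_def using Q subgroup_imp_group by blast
  have cH: "carrier H = Q" unfolding H_def by simp
  have mH: "\<And>x y. x \<otimes>\<^bsub>H\<^esub> y = x \<otimes> y" unfolding H_def by simp
  have bij: "\<phi> h \<in> Bij \<Omega>" if h: "h \<in> Q" for h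
  proof -
    have hi: "inv h \<in> Q" by (rule subgroup.m_inv_closed[OF Q h])
    have hc: "h \<in> carrier G" by (rule subgroup.mem_carrier[OF Q h])
    have inv1: "f h (f (inv h) S) = S" if "S \<in> \<Omega>" for S
      using comp[OF h hi that] one[OF that] r_inv[OF hc] by simp
    have inv2: "f (inv h) (f h S) = S" if "S \<in> \<Omega>" for S
      using comp[OF hi h that] one[OF that] l_inv[OF hc] by simp
    have "bij_betw (f h) \<Omega> \<Omega>"
      by (rule bij_betwI[where g="f (inv h)"]) (use cl[OF h] cl[OF hi] inv1 inv2 in auto)
    then show ?thesis unfolding Bij_def \<phi>_def
      by (auto simp: bij_betw_def inj_on_def image_def)
  qed
  have act: "group_action H \<Omega> \<phi>"
    unfolding group_action_def group_hom_def group_hom_axioms_def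
  proof (intro conjI)
    show "group H" by (rule gH)
    show "group (BijGroup \<Omega>)" by (rule group_BijGroup)
    show "\<phi> \<in> hom H (BijGroup \<Omega>)"
      unfolding hom_def
    proof (intro CollectI conjI ballI)
      show "\<phi> \<in> carrier H \<rightarrow> carrier (BijGroup \<Omega>)"
        using bij cH by (auto simp: BijGroup_def)
      fix x y assume x: "x \<in> carrier H" and y: "y \<in> carrier H"
      show "\<phi> (x \<otimes>\<^bsub>H\<^esub> y) = \<phi> x \<otimes>\<^bsub>BijGroup \<Omega>\<^esub> \<phi> y"
        using bij[of x] bij[of y] x y cH mH comp cl
      proof -
        have "\<phi> x \<in> Bij \<Omega>" "\<phi> y \<in> Bij \<Omega>" using bij x y cH by auto
        moreover have "\<phi> (x \<otimes> y) = compose \<Omega> (\<phi> x) (\<phi> y)"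
          unfolding \<phi>_def compose_def using comp x y cH cl by (intro ext) simp
        ultimately show ?thesis using mH by (simp add: BijGroup_def)
      qed
    qed
  qed
  show ?thesis
  proof (rule ccontr)
    assume nf: "\<not> ?thesis"
    have "p dvd card orb" if orb: "orb \<in> orbits H \<Omega> \<phi>" for orb
    proof -
      obtain S where S: "S \<in> \<Omega>" and oS: "orb = orbit H \<phi> S"
        using orb unfolding orbits_def by blast
      have "card (orbit H \<phi> S) * card (stabilizer H \<phi> S) = order H"
        using group_action.orbit_stabilizer_theorem[OF act S] .
      then have "card orb dvd p ^ a" using oS cQ cH unfolding order_def
        by (metis dvd_triv_left)
      then obtain i where i: "card orb = p ^ i" using divides_primepow_nat[OF p] by blast
      show ?thesis
      proof (cases i)
        case 0
        then have c1: "card orb = 1" using i by simp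
        have Sin: "S \<in> orb" using group_action.orbit_refl[OF act S] oS by simp
        have "\<forall>h\<in>Q. f h S = S"
        proof
          fix h assume h: "h \<in> Q"
          have "\<phi> h S \<in> orb" using oS h cH unfolding orbit_def by blast
          then have "\<phi> h S = S" using c1 Sin by (metis card_1_singletonE singletonD)
          then show "f h S = S" using S unfolding \<phi>_def by simp
        qed
        then show ?thesis using nf S by blast
      next
        case (Suc j)
        then show ?thesis using i by simp
      qed
    qed
    then have "p dvd (\<Sum>orb\<in>orbits H \<Omega> \<phi>. card orb)"
      by (intro dvd_sum) simp
    also have "(\<Sum>orb\<in>orbits H \<Omega> \<phi>. card orb) = (\<Sum>orb\<in>orbits H \<Omega> \<phi>. \<Sum>x\<in>orb. (1::nat))"
      by simp
    also have "(\<Sum>orb\<in>orbits H \<Omega> \<phi>. \<Sum>x\<in>orb. (1::nat)) = (\<Sum>x\<in>\<Omega>. 1)"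
      using group_action.disjoint_sum[OF act fin] .
    finally show False using ndvd by simp
  qed
qed

lemma card_subgroup_dvd:
  assumes "subgroup A G" "subgroup B G" "A \<subseteq> B"
  shows "card A dvd card B"
proof -
  have g: "group (G\<lparr>carrier := B\<rparr>)" using subgroup_imp_group[OF assms(2)] .
  have "subgroup A (G\<lparr>carrier := B\<rparr>)" using subgroup_incl[OF assms] .
  then have "card (rcosets\<^bsub>G\<lparr>carrier := B\<rparr>\<^esub> A) * card A = order (G\<lparr>carrier := B\<rparr>)"
    using group.lagrange[OF g] by blast
  then have "card (rcosets\<^bsub>G\<lparr>carrier := B\<rparr>\<^esub> A) * card A = card B"
    unfolding order_def by simp
  then show ?thesis by (metis dvd_triv_right)
qed

end

theorem lemma2p3:
  fixes G (structure) and p :: nat and P :: "'a set"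
  assumes "group G" and "finite (carrier G)"
    and "prime p" and "odd p"
    and "sylow_subgroup G p P"
    and "P \<noteq> {\<one>}"
    and "odd (order ((G\<lparr>carrier := normalizer G P\<rparr>) Mod (P <#> centralizer G P)))"
  shows "\<forall>z \<in> group_center G P. z \<noteq> \<one> \<longrightarrow> \<not> real_in G z"
proof (intro ballI impI notI)
  fix z assume zZ: "z \<in> group_center G P" and z1: "z \<noteq> \<one>" and rz: "real_in G z"
  interpret group G by (rule assms(1))
  from assms(5) obtain a where subP: "subgroup P G" and cP: "card P = p ^ a"
    and ndv: "\<not> p dvd (order G div card P)" unfolding sylow_subgroup_def by blast
  have Pc: "P \<subseteq> carrier G" using subP subgroup.subset by blast
  have finP: "finite P" using finite_subset[OF Pc assms(2)] .
  have oneP: "\<one> \<in> P" using subP subgroup.one_closed by blast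
  have cPpos: "card P > 0" using finP oneP card_gt_0_iff by blast
  have zP: "z \<in> P" and zcomm: "\<And>h. h \<in> P \<Longrightarrow> z \<otimes> h = h \<otimes> z"
    using zZ unfolding group_center_def by auto
  have zc: "z \<in> carrier G" using zP Pc by blast
  obtain g where g: "g \<in> carrier G" and gz: "cj G g z = inv z"
    using rz unfolding real_in_def cj_def by blast
  have oddP: "odd (card P)" using cP assms(4) by simp
  have zinv: "z \<noteq> inv z"
  proof
    assume e: "z = inv z"
    have zz: "z \<otimes> z = \<one>" using zc by (subst (2) e) simp
    have gP: "group (G\<lparr>carrier := P\<rparr>)" using subgroup_imp_group[OF subP] .
    have "z [^]\<^bsub>G\<lparr>carrier := P\<rparr>\<^esub> order (G\<lparr>carrier := P\<rparr>) = \<one>\<^bsub>G\<lparr>carrier := P\<rparr>\<^esub>"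
      using group.pow_order_eq_1[OF gP] zP by simp
    then have zp: "z [^] card P = \<one>" unfolding order_def using nat_pow_consistent[of z "card P" P, symmetric] by simp
    obtain m where m: "card P = Suc (2 * m)" using oddP by (metis oddE Suc_eq_plus1)
    have "z [^] (2::nat) = \<one>" using zz zc by (simp add: numeral_2_eq_2)
    then have "z [^] (2 * m) = \<one>" using zc by (simp add: nat_pow_pow[symmetric])
    then have "z [^] card P = z" using zc m by simp
    then show False using zp z1 by simp
  qed
  define C where "C = centralizer G {z}"
  have subC: "subgroup C G" unfolding C_def using centralizer_subgroup zc by simp
  have Cmem: "x \<in> C \<longleftrightarrow> x \<in> carrier G \<and> cj G x z = z" for x
    unfolding C_def centralizer_def using cj_comm_iff zc by auto
  have cjPz: "cj G q z = z" if "q \<in> P" for q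
    using cj_comm_iff[of q z] zcomm[OF that] that Pc zc by auto
  have cjinvz: "cj G (inv g) z = inv z"
  proof -
    have "cj G (inv g) (inv z) = z" using cj_back[OF g zc gz] .
    then have "inv (cj G (inv g) (inv z)) = inv z" by simp
    then show ?thesis using cj_inv[of "inv g" "inv z"] g zc by simp
  qed
  have step1: "\<exists>n\<in>normalizer G P. cj G n z = inv z"
  proof -
    define X where "X = {x \<in> carrier G. cj G x z = inv z}"
    have Xc: "X \<subseteq> carrier G" unfolding X_def by blast
    have finX: "finite X" using finite_subset[OF Xc assms(2)] .
    have XmultL: "q \<otimes> x \<in> X" if q: "q \<in> P" and x: "x \<in> X" for q x
    proof -
      have qc: "q \<in> carrier G" using q Pc by blast
      have xc: "x \<in> carrier G" and xz: "cj G x z = inv z" using x unfolding X_def by auto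
      have "cj G (q \<otimes> x) z = cj G q (inv z)" using cj_mult[OF qc xc zc] xz by simp
      also have "\<dots> = inv z" using cj_inv[OF qc zc] cjPz[OF q] by simp
      finally show ?thesis unfolding X_def using qc xc by simp
    qed
    have XmultR: "x \<otimes> h \<in> X" if h: "h \<in> P" and x: "x \<in> X" for h x
    proof -
      have hc: "h \<in> carrier G" using h Pc by blast
      have xc: "x \<in> carrier G" and xz: "cj G x z = inv z" using x unfolding X_def by auto
      have "cj G (x \<otimes> h) z = inv z" using cj_mult[OF xc hc zc] xz cjPz[OF h] by simp
      then show ?thesis unfolding X_def using hc xc by simp
    qed
    have cardX: "card X = card C"
    proof (rule bij_betw_same_card[of "\<lambda>x. x \<otimes> inv g"], rule bij_betwI[where g="\<lambda>c. c \<otimes> g"])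
      show "(\<lambda>x. x \<otimes> inv g) \<in> X \<rightarrow> C"
      proof
        fix x assume x: "x \<in> X"
        have xc: "x \<in> carrier G" and xz: "cj G x z = inv z" using x unfolding X_def by auto
        have "cj G (x \<otimes> inv g) z = cj G x (inv z)" using cj_mult[OF xc _ zc] g cjinvz by simp
        also have "\<dots> = z" using cj_inv[OF xc zc] xz zc by simp
        finally show "x \<otimes> inv g \<in> C" using Cmem xc g by simp
      qed
      show "(\<lambda>c. c \<otimes> g) \<in> C \<rightarrow> X"
      proof
        fix c assume c: "c \<in> C"
        have cc: "c \<in> carrier G" and cz: "cj G c z = z" using c Cmem by auto
        have "cj G (c \<otimes> g) z = cj G c (inv z)" using cj_mult[OF cc g zc] gz by simp
        also have "\<dots> = inv z" using cj_inv[OF cc zc] cz by simp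
        finally show "c \<otimes> g \<in> X" unfolding X_def using cc g by simp
      qed
      show "x \<otimes> inv g \<otimes> g = x" if "x \<in> X" for x
      proof -
        have "x \<in> carrier G" using that Xc by blast
        then show ?thesis using g by (simp add: m_assoc)
      qed
      show "c \<otimes> g \<otimes> inv g = c" if "c \<in> C" for c
      proof -
        have "c \<in> carrier G" using that Cmem by blast
        then show ?thesis using g by (simp add: m_assoc)
      qed
    qed
    define \<Omega> where "\<Omega> = (\<lambda>x. P #> x) ` X"
    have finO: "finite \<Omega>" unfolding \<Omega>_def using finX by simp
    have rcosX: "P #> x \<subseteq> X" if "x \<in> X" for x
      using XmultL[OF _ that] unfolding r_coset_def by auto
    have UO: "\<Union>\<Omega> = X"
    proof
      show "\<Union>\<Omega> \<subseteq> X" unfolding \<Omega>_def using rcosX by auto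
      show "X \<subseteq> \<Union>\<Omega>" unfolding \<Omega>_def using rcos_self[OF _ subP] Xc by blast
    qed
    have Osub: "S \<subseteq> carrier G" if "S \<in> \<Omega>" for S using that UO Xc by blast
    have cardS: "card S = card P" if "S \<in> \<Omega>" for S
    proof -
      have "S \<in> rcosets P" using that Xc unfolding \<Omega>_def RCOSETS_def by blast
      then show ?thesis using card_rcosets_equal[OF _ Pc] by simp
    qed
    have disj: "S1 \<inter> S2 = {}" if "S1 \<in> \<Omega>" "S2 \<in> \<Omega>" "S1 \<noteq> S2" for S1 S2
    proof -
      have "S1 \<in> rcosets P" "S2 \<in> rcosets P" using that Xc unfolding \<Omega>_def RCOSETS_def by blast+
      then show ?thesis using rcos_disjoint[OF subP] that(3) unfolding pairwise_def disjnt_def by blast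
    qed
    have "card P * card \<Omega> = card (\<Union>\<Omega>)"
      by (rule card_partition) (use finO UO finX cardS disj in auto)
    then have cO: "card P * card \<Omega> = card C" using UO cardX by simp
    have l1: "card (rcosets C) * card C = order G" using lagrange[OF subC] .
    have l2: "card (rcosets P) * card P = order G" using lagrange[OF subP] .
    have "card (rcosets P) * card P = (card (rcosets C) * card \<Omega>) * card P"
    proof -
      have "order G = card (rcosets C) * (card P * card \<Omega>)" using l1 cO by simp
      then show ?thesis using l2 by (simp add: ac_simps)
    qed
    then have "card (rcosets P) = card (rcosets C) * card \<Omega>" using cPpos by simp
    moreover have "order G div card P = card (rcosets P)" using l2 cPpos by (metis nonzero_mult_div_cancel_right neq0_conv)
    ultimately have ndO: "\<not> p dvd card \<Omega>" using ndv by (metis dvd_mult)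
    have "\<exists>S\<in>\<Omega>. \<forall>h\<in>P. S #> inv h = S"
    proof (rule pgroup_fixed_point[OF subP cP assms(3) finO ndO])
      fix h S assume h: "h \<in> P" and S: "S \<in> \<Omega>"
      obtain x where x: "x \<in> X" and Sx: "S = P #> x" using S unfolding \<Omega>_def by blast
      have hi: "inv h \<in> P" using subgroup.m_inv_closed[OF subP h] .
      have "S #> inv h = P #> (x \<otimes> inv h)" using Sx coset_mult_assoc[OF Pc] x Xc hi Pc by blast
      then show "S #> inv h \<in> \<Omega>" unfolding \<Omega>_def using XmultR[OF hi x] by blast
    next
      fix S assume S: "S \<in> \<Omega>"
      show "S #> inv \<one> = S" using Osub[OF S] by simp
    next
      fix h k S assume h: "h \<in> P" and k: "k \<in> P" and S: "S \<in> \<Omega>"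
      have hc: "h \<in> carrier G" and kc: "k \<in> carrier G" using h k Pc by auto
      have "S #> inv (h \<otimes> k) = S #> (inv k \<otimes> inv h)" using inv_mult_group[OF hc kc] by simp
      also have "\<dots> = S #> inv k #> inv h" using coset_mult_assoc[OF Osub[OF S]] hc kc by simp
      finally show "S #> inv (h \<otimes> k) = S #> inv k #> inv h" .
    qed
    then obtain S where S: "S \<in> \<Omega>" and fixS: "\<And>h. h \<in> P \<Longrightarrow> S #> inv h = S" by blast
    obtain x where x: "x \<in> X" and Sx: "S = P #> x" using S unfolding \<Omega>_def by blast
    have xc: "x \<in> carrier G" using x Xc by blast
    have "cj G x h \<in> P" if h: "h \<in> P" for h
    proof -
      have hc: "h \<in> carrier G" using h Pc by blast
      have "S #> inv (inv h) = S" using fixS subgroup.m_inv_closed[OF subP h] by blast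
      then have Sh: "S #> h = S" using hc by simp
      have "x \<in> S" using Sx rcos_self[OF xc subP] by simp
      then have "x \<otimes> h \<in> S #> h" unfolding r_coset_def by blast
      then have "x \<otimes> h \<in> P #> x" using Sh Sx by simp
      then obtain q where q: "q \<in> P" and e: "x \<otimes> h = q \<otimes> x" unfolding r_coset_def by blast
      have "cj G x h = q" using cj_eq_iff[OF xc hc] q Pc e by blast
      then show ?thesis using q by simp
    qed
    then have "x \<in> normalizer G P" using normalizer_memI[OF Pc finP xc] by blast
    moreover have "cj G x z = inv z" using x unfolding X_def by simp
    ultimately show ?thesis by blast
  qed
  then obtain n where nN: "n \<in> normalizer G P" and nz: "cj G n z = inv z" by blast
  define N where "N = normalizer G P"
  define NG where "NG = G\<lparr>carrier := N\<rparr>"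
  have subN: "subgroup N G" unfolding N_def using normalizer_imp_subgroup[OF Pc] .
  have Nc: "N \<subseteq> carrier G" using subN subgroup.subset by blast
  have gNG: "group NG" unfolding NG_def using subgroup_imp_group[OF subN] .
  define CP where "CP = centralizer G P"
  have subCP: "subgroup CP G" unfolding CP_def using centralizer_subgroup[OF Pc] .
  have CPN: "CP \<subseteq> N"
  proof
    fix c assume c: "c \<in> CP"
    have cc: "c \<in> carrier G" and ch: "\<And>h. h \<in> P \<Longrightarrow> c \<otimes> h = h \<otimes> c"
      using c unfolding CP_def centralizer_def by auto
    have "cj G c h \<in> P" if "h \<in> P" for h
      using cj_comm_iff[OF cc, of h] ch[OF that] that Pc by auto
    then show "c \<in> N" unfolding N_def using normalizer_memI[OF Pc finP cc] by blast
  qed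
  have normP: "normal P NG" unfolding NG_def N_def using subgroup_in_normalizer[OF subP] .
  have subCP_NG: "subgroup CP NG" unfolding NG_def using subgroup_incl[OF subCP subN CPN] .
  define K where "K = P <#> CP"
  have subK: "subgroup K NG"
    using group.mult_norm_subgroup[OF gNG normP subCP_NG] unfolding K_def NG_def by simp
  have KN: "K \<subseteq> N" using subgroup.subset[OF subK] unfolding NG_def by simp
  define H where "H = N \<inter> C"
  have subH: "subgroup H G" unfolding H_def using subgroups_Inter_pair[OF subN subC] .
  have KH: "K \<subseteq> H"
  proof
    fix y assume y: "y \<in> K"
    then obtain q c where q: "q \<in> P" and c: "c \<in> CP" and yqc: "y = q \<otimes> c"
      unfolding K_def set_mult_def by blast
    have cc: "c \<in> carrier G" and ch: "c \<otimes> z = z \<otimes> c"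
      using c zP unfolding CP_def centralizer_def by auto
    have qc: "q \<in> carrier G" using q Pc by blast
    have "cj G c z = z" using cj_comm_iff[OF cc zc] ch by simp
    then have "cj G y z = z" using yqc cj_mult[OF qc cc zc] cjPz[OF q] by simp
    then show "y \<in> H" unfolding H_def using y KN Cmem qc cc yqc by auto
  qed
  define M where "M = {x \<in> carrier G. cj G x z = z \<or> cj G x z = inv z}"
  have subM: "subgroup M G"
  proof (rule subgroupI)
    show "M \<subseteq> carrier G" unfolding M_def by blast
    have "\<one> \<in> M" unfolding M_def using zc by simp
    then show "M \<noteq> {}" by blast
  next
    fix x assume x: "x \<in> M"
    have xc: "x \<in> carrier G" using x unfolding M_def by blast
    have "cj G (inv x) z = z \<or> cj G (inv x) z = inv z"
    proof (cases "cj G x z = z")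
      case True
      then show ?thesis using cj_back[OF xc zc] by blast
    next
      case False
      then have e: "cj G x z = inv z" using x unfolding M_def by blast
      have "cj G x (inv z) = z" using cj_inv[OF xc zc] e zc by simp
      then have "cj G (inv x) z = inv z" using cj_back[OF xc] zc by simp
      then show ?thesis by blast
    qed
    then show "inv x \<in> M" unfolding M_def using xc by simp
  next
    fix x y assume x: "x \<in> M" and y: "y \<in> M"
    have xc: "x \<in> carrier G" and yc: "y \<in> carrier G" using x y unfolding M_def by auto
    have xz: "cj G x z = z \<or> cj G x z = inv z" using x unfolding M_def by blast
    have "cj G (x \<otimes> y) z = z \<or> cj G (x \<otimes> y) z = inv z"
    proof (cases "cj G y z = z")
      case True
      then show ?thesis using cj_mult[OF xc yc zc] xz by simp
    next
      case False
      then have e: "cj G y z = inv z" using y unfolding M_def by blast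
      then show ?thesis using cj_mult[OF xc yc zc] cj_inv[OF xc zc] xz zc by auto
    qed
    then show "x \<otimes> y \<in> M" unfolding M_def using xc yc by simp
  qed
  define H' where "H' = N \<inter> M"
  have subH': "subgroup H' G" unfolding H'_def using subgroups_Inter_pair[OF subN subM] .
  have nNN: "n \<in> N" unfolding N_def using nN .
  have nc: "n \<in> carrier G" using nNN Nc by blast
  have HN: "H \<subseteq> N" unfolding H_def by blast
  have H'N: "H' \<subseteq> N" unfolding H'_def by blast
  have Hc: "H \<subseteq> carrier G" using HN Nc by blast
  have finH: "finite H" using finite_subset[OF Hc assms(2)] .
  have nH: "n <# H = (\<lambda>h. n \<otimes> h) ` H" unfolding l_coset_def by auto
  have H'eq: "H' = H \<union> (n <# H)"
  proof
    show "H' \<subseteq> H \<union> (n <# H)"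
    proof
      fix x assume x: "x \<in> H'"
      have xN: "x \<in> N" and xM: "x \<in> M" using x unfolding H'_def by auto
      have xc: "x \<in> carrier G" and xz: "cj G x z = z \<or> cj G x z = inv z"
        using xM unfolding M_def by auto
      show "x \<in> H \<union> (n <# H)"
      proof (cases "cj G x z = z")
        case True
        then show ?thesis unfolding H_def using xN Cmem xc by auto
      next
        case False
        then have e: "cj G x z = inv z" using xz by blast
        define y where "y = inv n \<otimes> x"
        have yN: "y \<in> N" unfolding y_def using subN nNN xN
          by (simp add: subgroup.m_closed subgroup.m_inv_closed)
        have yc: "y \<in> carrier G" unfolding y_def using nc xc by simp
        have "cj G y z = cj G (inv n) (inv z)" unfolding y_def using cj_mult[OF _ xc zc] nc e by simp
        also have "\<dots> = z" using cj_back[OF nc zc nz] .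
        finally have "y \<in> H" unfolding H_def using yN Cmem yc by auto
        moreover have "x = n \<otimes> y" unfolding y_def using nc xc by (simp add: m_assoc[symmetric])
        ultimately have "x \<in> n <# H" unfolding l_coset_def by blast
        then show ?thesis by blast
      qed
    qed
    show "H \<union> (n <# H) \<subseteq> H'"
    proof
      fix x assume x: "x \<in> H \<union> (n <# H)"
      show "x \<in> H'"
      proof (cases "x \<in> H")
        case True
        then show ?thesis unfolding H_def H'_def M_def using Cmem by auto
      next
        case False
        then have "x \<in> n <# H" using x by blast
        then obtain h where h: "h \<in> H" and xe: "x = n \<otimes> h" unfolding l_coset_def by blast
        have hN: "h \<in> N" and hc: "h \<in> carrier G" and hz: "cj G h z = z"
          using h Cmem unfolding H_def by auto
        have "x \<in> N" using xe subN nNN hN by (simp add: subgroup.m_closed)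
        moreover have "cj G x z = inv z" using xe cj_mult[OF nc hc zc] hz nz by simp
        ultimately show ?thesis unfolding H'_def M_def using nc hc xe by simp
      qed
    qed
  qed
  have disjH: "H \<inter> (n <# H) = {}"
  proof (rule ccontr)
    assume "H \<inter> (n <# H) \<noteq> {}"
    then obtain y where y1: "y \<in> H" and y2: "y \<in> n <# H" by blast
    then obtain h where h: "h \<in> H" and yh: "y = n \<otimes> h" unfolding l_coset_def by blast
    have nh: "n \<otimes> h \<in> H" using y1 yh by simp
    have hc: "h \<in> carrier G" and hz: "cj G h z = z" using h Cmem unfolding H_def by auto
    have "cj G (n \<otimes> h) z = z" using nh Cmem unfolding H_def by auto
    moreover have "cj G (n \<otimes> h) z = inv z" using cj_mult[OF nc hc zc] hz nz by simp
    ultimately show False using zinv by simp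
  qed
  have cnH: "card (n <# H) = card H"
  proof -
    have "inj_on (\<lambda>h. n \<otimes> h) H"
    proof (rule inj_onI)
      fix a b assume "a \<in> H" "b \<in> H" "n \<otimes> a = n \<otimes> b"
      then show "a = b" using nc Hc by (metis Units_eq Units_l_cancel subsetD)
    qed
    then show ?thesis unfolding nH by (rule card_image)
  qed
  have cH': "card H' = 2 * card H"
    using H'eq card_Un_disjoint[OF finH _ disjH] cnH finH nH by simp
  have d1: "card H' dvd card N" using card_subgroup_dvd[OF subH' subN H'N] .
  have subH_NG: "subgroup H NG" unfolding NG_def using subgroup_incl[OF subH subN HN] .
  have d2: "card K dvd card H" using group.card_subgroup_dvd[OF gNG subK subH_NG KH] .
  have lag: "card (rcosets\<^bsub>NG\<^esub> K) * card K = card N"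
    using group.lagrange[OF gNG subK] unfolding order_def NG_def by simp
  have Kpos: "card K > 0"
  proof -
    have "\<one>\<^bsub>NG\<^esub> \<in> K" using subgroup.one_closed[OF subK] .
    then have "\<one> \<in> K" unfolding NG_def by simp
    moreover have "finite K" using finite_subset[OF _ assms(2)] KN Nc by blast
    ultimately show ?thesis using card_gt_0_iff by blast
  qed
  obtain u where u: "card N = card H' * u" using d1 by blast
  obtain v where v: "card H = card K * v" using d2 by blast
  have "card (rcosets\<^bsub>NG\<^esub> K) * card K = (2 * u * v) * card K"
    using lag u v cH' by (simp add: mult.commute mult.left_commute)
  then have "card (rcosets\<^bsub>NG\<^esub> K) = 2 * u * v" using Kpos by simp
  moreover have "order (NG Mod K) = card (rcosets\<^bsub>NG\<^esub> K)"
    unfolding order_def FactGroup_def by simp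
  ultimately have "even (order (NG Mod K))" by simp
  then show False using assms(7) unfolding NG_def N_def K_def CP_def by simp
qed

end
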